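(* Fix $V_{\sf P}\ge0$. Then $$\lim_{\delta\to1}\lim_{p\to0}\frac{{\sf Eng}({\sf PEAR})}{{\sf Eng}({\sf APP})}=1,\qquad \lim_{\delta\to1}\lim_{p\to0}\frac{{\sf Util}({\sf PEAR})}{{\sf Util}({\sf APP})}=1+\frac{1}{\ln(1+2e^{V_{\sf P}})}.$$
   Context: Model. Time $t=0,1,2,\dots$, discount factor $\delta\in[0,1)$. Two item types, popular ${\sf P}$ and niche ${\sf N}$, infinitely many items each; at each time $t$ the platform recommends a set $\pi_t$ of two fresh items of chosen types. Utility of item $i$: $u_i=V_{\tau(i)}+\epsilon_i$; outside option: $u_\emptyset=\epsilon_\emptyset$; all noises i.i.d. Gumbel with scale $1$ and mean $0$. User chooses $c_t=\arg\max_{j\in\pi_t\cup\{\emptyset\}}u_j$. $V_{\sf P}$ is a known constant; $V_{\sf N}$ is drawn once, fixed over time, independent of noise, with $\mathbb P(V_{\sf N}=(1-p)/p)=p$, $\mathbb P(V_{\sf N}=-1)=1-p$, $p\in(0,1)$. ${\sf Eng}(\pi)=\sum_{t\ge0}\delta^t\mathbb P(c_t\ne\emptyset)$, ${\sf Util}(\pi)=\sum_{t\ge0}\delta^t\mathbb E[\max_{j\in\pi_t\cup\{\emptyset\}}u_j]$ (expectations also over $V_{\sf N}$). ${\sf APP}$ recommends two popular items at every time. Policy ${\sf PEAR}$: let $\rho_1=\frac{e^{(1-p)/p}}{1+e^{V_{\sf P}}+e^{(1-p)/p}}$, $\rho_2=\frac{e^{-1}}{1+e^{V_{\sf P}}+e^{-1}}$.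 Maintain counters $S,F$ (initially $0$) and $p_0=p$. At each time $t$: if $p_t\ge p$, recommend one popular and one niche item; if the niche item is chosen increment $S$, otherwise increment $F$. If $p_t<p$, recommend two popular items. Then set $p_{t+1}=\left(1+\frac{1-p}{p}\cdot\frac{\rho_2^S(1-\rho_2)^F}{\rho_1^S(1-\rho_1)^F}\right)^{-1}$. *)

theory Defs
  imports "HOL-Analysis.Analysis" "HOL-Probability.Probability"
begin

section \<open>Gumbel noise (scale 1, mean 0, i.e. location -euler_mascheroni)\<close>

definition gumbel_density :: "real \<Rightarrow> real" where
  "gumbel_density x =
     exp (-(x + euler_mascheroni)) * exp (- exp (-(x + euler_mascheroni)))"

definition gumbel :: "real measure" where
  "gumbel = density lborel (\<lambda>x. ennreal (gumbel_density x))"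

text \<open>A recommended set is given by the list vs of mean utilities of its items.
  Index 0 is the outside option (utility = its noise), index i+1 is item i
  (utility vs!i + noise).\<close>

definition noise :: "real list \<Rightarrow> (nat \<Rightarrow> real) measure" where
  "noise vs = PiM {..length vs} (\<lambda>_. gumbel)"

definition util :: "real list \<Rightarrow> (nat \<Rightarrow> real) \<Rightarrow> nat \<Rightarrow> real" where
  "util vs \<omega> i = (if i = 0 then 0 else vs ! (i - 1)) + \<omega> i"

definition choice_prob :: "real list \<Rightarrow> nat \<Rightarrow> real" where
  "choice_prob vs j = measure (noise vs)
     {\<omega> \<in> space (noise vs). \<forall>i\<in>{..length vs}. i \<noteq> j \<longrightarrow> util vs \<omega> i < util vs \<omega> j}"

definition eng_step :: "real list \<Rightarrow> real" where
  "eng_step vs = (\<Sum>j\<in>{1..length vs}. choice_prob vs j)"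

definition util_step :: "real list \<Rightarrow> real" where
  "util_step vs = integral\<^sup>L (noise vs) (\<lambda>\<omega>. Max (util vs \<omega> ` {..length vs}))"

definition rho1 :: "real \<Rightarrow> real \<Rightarrow> real" where
  "rho1 VP p = exp ((1 - p) / p) / (1 + exp VP + exp ((1 - p) / p))"

definition rho2 :: "real \<Rightarrow> real \<Rightarrow> real" where
  "rho2 VP p = exp (-1) / (1 + exp VP + exp (-1))"

definition post :: "real \<Rightarrow> real \<Rightarrow> nat \<Rightarrow> nat \<Rightarrow> real" where
  "post VP p S F = inverse (1 + (1 - p) / p *
      ((rho2 VP p ^ S * (1 - rho2 VP p) ^ F) / (rho1 VP p ^ S * (1 - rho1 VP p) ^ F)))"

text \<open>Offered set at a state (S,F,p_t): one popular + one niche item when exploring,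
  otherwise two popular items.  v is the realised value of V_N.\<close>
definition pear_offer :: "real \<Rightarrow> real \<Rightarrow> real \<Rightarrow> real \<Rightarrow> real list" where
  "pear_offer VP p v q = (if q \<ge> p then [VP, v] else [VP, VP])"

text \<open>One step of the state process (S, F, p_t), given V_N = v.  When exploring,
  the niche item (index 2) is chosen with its true choice probability.\<close>
definition pear_step :: "real \<Rightarrow> real \<Rightarrow> real \<Rightarrow> nat \<times> nat \<times> real \<Rightarrow> (nat \<times> nat \<times> real) pmf" where
  "pear_step VP p v st = (case st of (S, F, q) \<Rightarrow>
     if q \<ge> p then
       map_pmf (\<lambda>b. if b then (S + 1, F, post VP p (S + 1) F) else (S, F + 1, post VP p S (F + 1)))
         (bernoulli_pmf (choice_prob [VP, v] 2))
     else return_pmf (S, F, post VP p S F))"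

primrec pear_state :: "real \<Rightarrow> real \<Rightarrow> real \<Rightarrow> nat \<Rightarrow> (nat \<times> nat \<times> real) pmf" where
  "pear_state VP p v 0 = return_pmf (0, 0, p)"
| "pear_state VP p v (Suc t) = bind_pmf (pear_state VP p v t) (pear_step VP p v)"

definition eng_pear_given :: "real \<Rightarrow> real \<Rightarrow> real \<Rightarrow> real \<Rightarrow> real" where
  "eng_pear_given VP \<delta> p v = (\<Sum>t. \<delta> ^ t *
     measure_pmf.expectation (pear_state VP p v t)
       (\<lambda>(S, F, q). eng_step (pear_offer VP p v q)))"

definition util_pear_given :: "real \<Rightarrow> real \<Rightarrow> real \<Rightarrow> real \<Rightarrow> real" where
  "util_pear_given VP \<delta> p v = (\<Sum>t. \<delta> ^ t *
     measure_pmf.expectation (pear_state VP p v t)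
       (\<lambda>(S, F, q). util_step (pear_offer VP p v q)))"

definition Eng_PEAR :: "real \<Rightarrow> real \<Rightarrow> real \<Rightarrow> real" where
  "Eng_PEAR VP \<delta> p = p * eng_pear_given VP \<delta> p ((1 - p) / p) + (1 - p) * eng_pear_given VP \<delta> p (-1)"

definition Util_PEAR :: "real \<Rightarrow> real \<Rightarrow> real \<Rightarrow> real" where
  "Util_PEAR VP \<delta> p = p * util_pear_given VP \<delta> p ((1 - p) / p) + (1 - p) * util_pear_given VP \<delta> p (-1)"

definition Eng_APP :: "real \<Rightarrow> real \<Rightarrow> real" where
  "Eng_APP VP \<delta> = (\<Sum>t. \<delta> ^ t * eng_step [VP, VP])"

definition Util_APP :: "real \<Rightarrow> real \<Rightarrow> real" where
  "Util_APP VP \<delta> = (\<Sum>t. \<delta> ^ t * util_step [VP, VP])"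

end

theory Submission
  imports Defs "HOL-Real_Asymp.Real_Asymp"
begin


definition GC :: "real \<Rightarrow> real" where
  "GC x = exp (- exp (-(x + euler_mascheroni)))"

lemma gumbel_density_nonneg: "0 \<le> gumbel_density x"
  by (simp add: gumbel_density_def)

lemma GC_deriv: "(GC has_real_derivative gumbel_density x) (at x)"
proof -
  have "((\<lambda>x. exp (- exp (-(x + euler_mascheroni)))) has_real_derivative
     exp (- exp (-(x + euler_mascheroni))) * (- (exp (-(x + euler_mascheroni)) * (-(1 + 0))))) (at x)"
    by (intro derivative_intros)
  thus ?thesis unfolding GC_def gumbel_density_def by (simp add: mult.commute)
qed

lemma GC_top_aux: "((\<lambda>x. exp (- exp (-(x+c)))::real) \<longlongrightarrow> 1) at_top" by real_asymp
lemma GC_bot_aux: "((\<lambda>x. exp (- exp (-(x+c)))::real) \<longlongrightarrow> 0) at_bot" by real_asymp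
lemma GC_top: "(GC \<longlongrightarrow> 1) at_top"
  unfolding GC_def[abs_def] by (rule GC_top_aux)
lemma GC_bot: "(GC \<longlongrightarrow> 0) at_bot"
  unfolding GC_def[abs_def] by (rule GC_bot_aux)

lemma GC_bounds: "0 < GC x" "GC x < 1"
  by (auto simp: GC_def)

lemma gumbel_density_borel[measurable]: "gumbel_density \<in> borel_measurable borel"
  unfolding gumbel_density_def by measurable

lemma space_gumbel[simp]: "space gumbel = UNIV" and sets_gumbel[simp]: "sets gumbel = sets borel"
  by (auto simp: gumbel_def)

lemma emeasure_gumbel_atLeast: "emeasure gumbel {a..} = ennreal (1 - GC a)"
proof -
  have "emeasure gumbel {a..} = (\<integral>\<^sup>+x. ennreal (gumbel_density x) * indicator {a ..} x \<partial>lborel)"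
    unfolding gumbel_def by (subst emeasure_density) auto
  also have "\<dots> = ennreal (1 - GC a)"
    by (rule nn_integral_FTC_atLeast[OF _ GC_deriv gumbel_density_nonneg GC_top]) auto
  finally show ?thesis .
qed

lemma emeasure_gumbel_singleton: "emeasure gumbel {a} = 0"
proof -
  have "emeasure gumbel {a} = (\<integral>\<^sup>+x. ennreal (gumbel_density x) * indicator {a} x \<partial>lborel)"
    unfolding gumbel_def by (subst emeasure_density) auto
  also have "\<dots> = (\<integral>\<^sup>+x. 0 \<partial>(lborel::real measure))"
    by (rule nn_integral_cong_AE, use AE_lborel_singleton[of a] in eventually_elim) (auto split: split_indicator)
  finally show ?thesis by simp
qed

lemma emeasure_gumbel_UNIV: "emeasure gumbel UNIV = 1"
proof -
  have inc: "incseq (\<lambda>n::nat. {- real n..})"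
    by (auto simp: incseq_def)
  have U: "(\<Union>n::nat. {- real n..}) = UNIV"
  proof safe
    fix x :: real
    obtain n :: nat where "-x \<le> real n" using real_arch_simple by blast
    thus "x \<in> (\<Union>n::nat. {- real n..})" by (auto intro!: exI[of _ n])
  qed auto
  have "(\<lambda>n. emeasure gumbel {- real n..}) \<longlonglongrightarrow> emeasure gumbel (\<Union>n::nat. {- real n..})"
    by (rule Lim_emeasure_incseq[OF _ inc]) auto
  hence 1: "(\<lambda>n. ennreal (1 - GC (- real n))) \<longlonglongrightarrow> emeasure gumbel UNIV"
    by (simp add: U emeasure_gumbel_atLeast)
  have "filterlim (\<lambda>n::nat. - real n) at_bot sequentially"
    by (simp add: filterlim_uminus_at_bot filterlim_real_sequentially)
  hence "(\<lambda>n. GC (- real n)) \<longlonglongrightarrow> 0"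
    by (rule filterlim_compose[OF GC_bot])
  hence "(\<lambda>n. ennreal (1 - GC (- real n))) \<longlonglongrightarrow> ennreal (1 - 0)"
    by (intro tendsto_intros)
  with 1 show ?thesis using LIMSEQ_unique by fastforce
qed

lemma prob_space_gumbel: "prob_space gumbel"
  by (rule prob_spaceI) (simp add: emeasure_gumbel_UNIV)

interpretation gumbel: prob_space gumbel by (rule prob_space_gumbel)

lemma real_distribution_gumbel: "real_distribution gumbel"
  unfolding real_distribution_def real_distribution_axioms_def using prob_space_gumbel by simp

lemma measure_gumbel_atLeast: "measure gumbel {a..} = 1 - GC a"
  using emeasure_gumbel_atLeast[of a] GC_bounds[of a]
  by (simp add: gumbel.emeasure_eq_measure)

lemma measure_gumbel_singleton: "measure gumbel {a} = 0"
  using emeasure_gumbel_singleton[of a] by (simp add: gumbel.emeasure_eq_measure)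

lemma measure_gumbel_greaterThan: "measure gumbel {a<..} = 1 - GC a"
proof -
  have "{a..} = {a<..} \<union> {a}" by auto
  moreover have "measure gumbel ({a<..} \<union> {a}) = measure gumbel {a<..} + measure gumbel {a}"
    by (rule gumbel.finite_measure_Union) auto
  ultimately have "measure gumbel {a..} = measure gumbel {a<..} + measure gumbel {a}" by simp
  thus ?thesis by (simp add: measure_gumbel_atLeast measure_gumbel_singleton)
qed

lemma measure_gumbel_atMost: "measure gumbel {..a} = GC a"
proof -
  have "{..a} = UNIV - {a<..}" by auto
  thus ?thesis by (simp add: gumbel.prob_compl[of "{a<..}", simplified] measure_gumbel_greaterThan)
qed

lemma measure_gumbel_lessThan: "measure gumbel {..<a} = GC a"
proof -
  have "{..<a} = UNIV - {a..}" by auto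
  thus ?thesis by (simp add: gumbel.prob_compl[of "{a..}", simplified] measure_gumbel_atLeast)
qed

lemma cdf_gumbel: "cdf gumbel = GC"
  by (simp add: fun_eq_iff cdf_def measure_gumbel_atMost)


lemma gamma_int_pos:
  assumes "x > (0::real)"
  shows "((\<lambda>t. t powr (x - 1) * exp (-t)) has_integral Gamma x) {0<..}"
proof -
  have "((\<lambda>t. t powr (x - 1) / exp t) has_integral Gamma x) {0..}"
    by (rule Gamma_integral_real) fact
  hence "((\<lambda>t. if t \<in> {0<..} then t powr (x - 1) / exp t else 0) has_integral Gamma x) {0..}"
    by (rule has_integral_spike [of "{0}", rotated 2]) auto
  also have "?this \<longleftrightarrow> ((\<lambda>t. t powr (x - 1) / exp t) has_integral Gamma x) {0<..}"
    by (subst has_integral_restrict) auto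
  finally show ?thesis by (simp add: exp_minus divide_inverse)
qed

lemma exp_int_pos: "((\<lambda>t. exp (-t)) has_integral 1) {(0::real)<..}"
proof -
  have "((\<lambda>t. t powr (1 - 1) * exp (-t)) has_integral Gamma 1) {(0::real)<..}"
    by (rule gamma_int_pos) simp
  hence "((\<lambda>t. exp (-t)) has_integral Gamma 1) {(0::real)<..}"
    by (rule has_integral_eq[rotated]) simp
  thus ?thesis by simp
qed

lemma neg_ln_le: fixes t :: real assumes "0 < t" shows "- ln t \<le> 2 * t powr (-1/2)"
proof -
  define s where "s = t powr (-1/2)"
  have s: "s > 0" using assms by (simp add: s_def)
  have "ln s = -1/2 * ln t" using assms by (simp add: s_def ln_powr)
  hence "- ln t = 2 * ln s" by simp
  also have "\<dots> \<le> 2 * (s - 1)" using ln_le_minus_one[OF s] by simp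
  also have "\<dots> \<le> 2 * s" by simp
  finally show ?thesis by (simp add: s_def)
qed

definition Hdom :: "real \<Rightarrow> real" where
  "Hdom t = (2 * t powr (-1/2) + t powr 2) * exp (-t)"

lemma Hdom_int: "((\<lambda>t. Hdom t) has_integral (2 * Gamma (1/2) + Gamma 3)) {0<..}"
proof -
  have a: "((\<lambda>t. t powr (1/2 - 1) * exp (-t)) has_integral Gamma (1/2)) {(0::real)<..}"
    by (rule gamma_int_pos) simp
  have b: "((\<lambda>t. t powr (3 - 1) * exp (-t)) has_integral Gamma 3) {(0::real)<..}"
    by (rule gamma_int_pos) simp
  have "((\<lambda>t. 2 * (t powr (1/2 - 1) * exp (-t)) + t powr (3 - 1) * exp (-t)) has_integral
        (2 * Gamma (1/2) + Gamma 3)) {(0::real)<..}"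
    by (intro has_integral_add has_integral_mult_right a b)
  thus ?thesis unfolding Hdom_def by (simp add: algebra_simps)
qed

lemma ln_exp_bound:
  assumes t: "0 < t" shows "\<bar>ln t\<bar> * exp (-t) \<le> Hdom t"
proof (cases "t \<ge> 1")
  case True
  have "\<bar>ln t\<bar> = ln t" using True by simp
  also have "\<dots> \<le> t" using ln_le_minus_one[of t] t by simp
  also have "\<dots> \<le> t powr 2" using True by (simp add: power2_eq_square)
  also have "\<dots> \<le> 2 * t powr (-1/2) + t powr 2" using t by simp
  finally show ?thesis unfolding Hdom_def by (intro mult_right_mono) auto
next
  case False
  have "\<bar>ln t\<bar> = - ln t" using False t by simp
  also have "\<dots> \<le> 2 * t powr (-1/2)" by (rule neg_ln_le) fact
  also have "\<dots> \<le> 2 * t powr (-1/2) + t powr 2" by simp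
  finally show ?thesis unfolding Hdom_def by (intro mult_right_mono) auto
qed

lemma powr_diff_bound:
  assumes t: "0 < t" and h: "0 < h" "h \<le> 1"
  shows "\<bar>(t powr h - 1) / h * exp (-t)\<bar> \<le> Hdom t"
proof -
  define a where "a = h * ln t"
  have tp: "t powr h = exp a" using t by (simp add: powr_def a_def)
  have eq: "\<bar>(t powr h - 1) / h * exp (-t)\<bar> = \<bar>(t powr h - 1) / h\<bar> * exp (-t)"
    by (simp add: abs_mult)
  have "\<bar>(t powr h - 1) / h\<bar> \<le> 2 * t powr (-1/2) + t powr 2"
  proof (cases "t \<ge> 1")
    case True
    have a0: "a \<ge> 0" using True h by (simp add: a_def)
    have "exp a - 1 \<le> a * exp a"
    proof -
      have "1 - a \<le> exp (-a)" using exp_ge_add_one_self[of "-a"] by simp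
      hence "(1 - a) * exp a \<le> exp (-a) * exp a" by (intro mult_right_mono) auto
      thus ?thesis by (simp add: exp_minus field_simps)
    qed
    moreover have "exp a \<ge> 1" using a0 by simp
    ultimately have "\<bar>(t powr h - 1) / h\<bar> \<le> ln t * t powr h"
      using h a0 by (simp add: tp a_def divide_simps mult_ac)
    also have "t powr h \<le> t powr 1" using True h by (intro powr_mono) auto
    hence "ln t * t powr h \<le> ln t * t" using True by (intro mult_left_mono) auto
    also have "ln t * t \<le> t * t" using ln_le_minus_one[of t] t by (intro mult_right_mono) auto
    also have "t * t \<le> 2 * t powr (-1/2) + t powr 2" using t by (simp add: power2_eq_square)
    finally have "\<bar>(t powr h - 1) / h\<bar> \<le> 2 * t powr (-1/2) + t powr 2" by simp
    thus ?thesis by simp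
  next
    case False
    have a0: "a \<le> 0" using False h t by (simp add: a_def mult_nonneg_nonpos)
    have "1 - exp a \<le> - a" using exp_ge_add_one_self[of a] by linarith
    moreover have "exp a \<le> 1" using a0 by simp
    ultimately have "\<bar>(t powr h - 1) / h\<bar> \<le> - ln t"
      using h a0 by (simp add: tp a_def divide_simps mult_ac)
    also have "\<dots> \<le> 2 * t powr (-1/2) + t powr 2" using neg_ln_le[OF t] powr_ge_zero[of t 2] by linarith
    finally show ?thesis .
  qed
  thus ?thesis unfolding eq Hdom_def by (rule mult_right_mono) simp
qed

lemma ln_exp_int:
  "((\<lambda>t::real. ln t * exp (-t)) has_integral (- euler_mascheroni)) {(0::real)<..}"
  "(\<lambda>t::real. ln t * exp (-t)) absolutely_integrable_on {(0::real)<..}"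
proof -
  define hk where "hk k = inverse (real (Suc k))" for k
  define f where "f k t = (t powr hk k - 1) / hk k * exp (-t)" for k t
  have hk_pos: "0 < hk k" for k by (simp add: hk_def)
  have hk_le: "hk k \<le> 1" for k by (simp add: hk_def field_simps)
  have hk_lim: "filterlim hk (at 0) sequentially"
    unfolding hk_def[abs_def] by (rule filterlim_atI[OF LIMSEQ_inverse_real_of_nat]) simp
  have fint: "(f k has_integral (Gamma (1 + hk k) - 1) / hk k) {0<..}" for k
  proof -
    have "((\<lambda>t. t powr (1 + hk k - 1) * exp (-t)) has_integral Gamma (1 + hk k)) {0<..}"
      by (rule gamma_int_pos) (use hk_pos[of k] in simp)
    from has_integral_divide[OF has_integral_diff[OF this exp_int_pos], of "hk k"]
    show ?thesis
      by (rule has_integral_eq[rotated]) (simp add: f_def field_simps)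
  qed
  have Hint: "Hdom integrable_on {0<..}" using Hdom_int by blast
  have bound: "norm (f k t) \<le> Hdom t" if "t \<in> {0<..}" for k t
    using powr_diff_bound[of t "hk k"] that hk_pos[of k] hk_le[of k] by (simp add: f_def)
  have conv: "(\<lambda>k. f k t) \<longlonglongrightarrow> ln t * exp (-t)" if "t \<in> {0<..}" for t
  proof -
    have t: "t > 0" using that by simp
    have "((\<lambda>h. exp (h * ln t)) has_real_derivative exp (0 * ln t) * (1 * ln t)) (at 0)"
      by (intro derivative_eq_intros) auto
    hence "((\<lambda>h. (exp ((0 + h) * ln t) - exp (0 * ln t)) / h) \<longlongrightarrow> ln t) (at 0)"
      unfolding DERIV_def by simp
    hence "((\<lambda>h. (t powr h - 1) / h) \<longlongrightarrow> ln t) (at 0)"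
      using t by (simp add: powr_def)
    hence "(\<lambda>k. (t powr hk k - 1) / hk k) \<longlonglongrightarrow> ln t"
      by (rule filterlim_compose[OF _ hk_lim])
    hence "(\<lambda>k. (t powr hk k - 1) / hk k * exp (-t)) \<longlonglongrightarrow> ln t * exp (-t)"
      by (intro tendsto_intros)
    thus ?thesis by (simp add: f_def)
  qed
  have fi: "f k integrable_on {0<..}" for k using fint[of k] by blast
  note dc0 = dominated_convergence[of f "{0<..}" Hdom "\<lambda>t. ln t * exp (-t)", OF fi Hint bound conv]
  note dc = dc0[simplified]
  have "(Gamma has_field_derivative Gamma 1 * Digamma 1) (at 1)"
    by (rule has_field_derivative_Gamma) simp
  hence "((\<lambda>h. (Gamma (1 + h) - Gamma 1) / h) \<longlongrightarrow> Gamma 1 * Digamma 1) (at 0)"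
    unfolding DERIV_def .
  hence "((\<lambda>h. (Gamma (1 + h) - 1) / h) \<longlongrightarrow> - euler_mascheroni) (at (0::real))"
    by simp
  hence "(\<lambda>k. (Gamma (1 + hk k) - 1) / hk k) \<longlonglongrightarrow> - euler_mascheroni"
    by (rule filterlim_compose[OF _ hk_lim])
  note lim = this
  have "integral {0<..} (f k) = (Gamma (1 + hk k) - 1) / hk k" for k
    using fint[of k] by (rule integral_unique)
  hence e: "(\<lambda>k. integral {0<..} (f k)) = (\<lambda>k. (Gamma (1 + hk k) - 1) / hk k)" by (rule ext)
  have "integral {0<..} (\<lambda>t::real. ln t * exp (-t)) = - euler_mascheroni"
    using LIMSEQ_unique[OF dc(2)[unfolded e] lim].
  with dc(1) show "((\<lambda>t::real. ln t * exp (-t)) has_integral (- euler_mascheroni)) {(0::real)<..}"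
    using integrable_integral by fastforce
  show "(\<lambda>t::real. ln t * exp (-t)) absolutely_integrable_on {(0::real)<..}"
    by (rule absolutely_integrable_integrable_bound[OF _ dc(1) Hint])
       (use ln_exp_bound in \<open>auto simp: abs_mult\<close>)
qed


lemma exp_abs_int: "(\<lambda>t. exp (-t)) absolutely_integrable_on {(0::real)<..}"
  by (rule nonnegative_absolutely_integrable_1) (use exp_int_pos in auto)

lemma gumbel_x_HK:
  "(\<lambda>x. gumbel_density x * x) absolutely_integrable_on UNIV \<and>
   integral UNIV (\<lambda>x. gumbel_density x * x) = 0"
proof -
  define g where "g t = -(ln t + euler_mascheroni)" for t :: real
  define S where "S = {(0::real)<..}"
  have S: "S \<in> sets lebesgue" by (simp add: S_def)
  have der: "(g has_field_derivative (- inverse t)) (at t within S)" if "t \<in> S" for t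
    using that unfolding g_def S_def by (auto intro!: derivative_eq_intros simp: divide_inverse)
  have inj: "inj_on g S"
    unfolding inj_on_def g_def S_def by auto
  have img: "g ` S = UNIV"
  proof safe
    fix x :: real
    have "g (exp (-(x + euler_mascheroni))) = x" by (simp add: g_def)
    moreover have "exp (-(x + euler_mascheroni)) \<in> S" by (simp add: S_def)
    ultimately show "x \<in> g ` S" by (metis image_eqI)
  qed simp
  define \<phi> where "\<phi> t = (-1) * (ln t * exp (-t)) - euler_mascheroni * exp (-t)" for t :: real
  have eq: "\<bar>- inverse t\<bar> * (gumbel_density (g t) * g t) = \<phi> t" if "t \<in> S" for t
  proof -
    have t: "t > 0" using that by (simp add: S_def)
    have "gumbel_density (g t) = t * exp (-t)"
      using t by (simp add: gumbel_density_def g_def)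
    thus ?thesis using t by (simp add: \<phi>_def g_def field_simps)
  qed
  have phi_abs: "\<phi> absolutely_integrable_on S"
    unfolding \<phi>_def S_def
    by (intro set_integral_diff(1) set_integrable_mult_right ln_exp_int exp_abs_int)
  have phi_int: "(\<phi> has_integral 0) S"
  proof -
    have "((\<lambda>t. (-1) * (ln t * exp (-t)) - euler_mascheroni * exp (-t)) has_integral
          ((-1) * (- euler_mascheroni) - euler_mascheroni * 1)) {(0::real)<..}"
      by (intro has_integral_diff has_integral_mult_right ln_exp_int exp_int_pos)
    thus ?thesis by (simp add: \<phi>_def[abs_def] S_def)
  qed
  have "(\<lambda>t. \<bar>- inverse t\<bar> * (gumbel_density (g t) * g t)) absolutely_integrable_on S \<and>
        integral S (\<lambda>t. \<bar>- inverse t\<bar> * (gumbel_density (g t) * g t)) = 0"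
  proof
    show "(\<lambda>t. \<bar>- inverse t\<bar> * (gumbel_density (g t) * g t)) absolutely_integrable_on S"
      using phi_abs by (subst set_integrable_cong[OF refl refl eq]) auto
    show "integral S (\<lambda>t. \<bar>- inverse t\<bar> * (gumbel_density (g t) * g t)) = 0"
      using phi_int by (subst integral_cong[OF eq]) (auto intro: integral_unique)
  qed
  hence "(\<lambda>x. gumbel_density x * x) absolutely_integrable_on g ` S \<and>
         integral (g ` S) (\<lambda>x. gumbel_density x * x) = 0"
    by (subst (asm) has_absolute_integral_change_of_variables_1'[OF S der inj])
  thus ?thesis by (simp add: img)
qed

lemma gumbel_x_borel[measurable]: "(\<lambda>x. gumbel_density x * x) \<in> borel_measurable borel"
  by measurable

lemma integrable_lborel_gumbel_x: "integrable lborel (\<lambda>x. gumbel_density x * x)"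
  and integral_lborel_gumbel_x: "(\<integral>x. gumbel_density x * x \<partial>lborel) = 0"
proof -
  have "integrable lebesgue (\<lambda>x. gumbel_density x * x)"
    using gumbel_x_HK by (simp add: set_integrable_def)
  thus I: "integrable lborel (\<lambda>x. gumbel_density x * x)"
    by (subst (asm) integrable_completion) auto
  show "(\<integral>x. gumbel_density x * x \<partial>lborel) = 0"
    using integral_lborel[OF I] gumbel_x_HK by simp
qed

lemma integrable_gumbel_id: "integrable gumbel (\<lambda>x. x)"
  unfolding gumbel_def
  by (subst integrable_density) (auto simp: gumbel_density_nonneg integrable_lborel_gumbel_x)

lemma integral_gumbel_id: "(\<integral>x. x \<partial>gumbel) = 0"
  unfolding gumbel_def
  by (subst integral_density) (auto simp: gumbel_density_nonneg integral_lborel_gumbel_x)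


abbreviation NN :: "(nat \<Rightarrow> real) measure" where
  "NN \<equiv> PiM {..2::nat} (\<lambda>_. gumbel)"

lemma atMost2: "{..2::nat} = {0,1,2}" by auto

lemma noise2: "noise [a, b] = NN"
  by (simp add: noise_def numeral_2_eq_2)

lemma pps: "product_prob_space (\<lambda>_::nat. gumbel)"
  by (rule product_prob_spaceI) (rule prob_space_gumbel)

lemma prob_space_NN: "prob_space NN"
  by (rule prob_space_PiM) (simp add: prob_space_gumbel)

interpretation NN: prob_space NN by (rule prob_space_NN)

lemma measure_NN_box:
  assumes "\<And>i. X i \<in> sets borel"
  shows "measure NN {\<omega> \<in> space NN. \<forall>i\<in>{..2}. \<omega> i \<in> X i} =
         measure gumbel (X 0) * measure gumbel (X 1) * measure gumbel (X 2)"
proof -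
  have "emeasure NN {\<omega> \<in> space NN. \<forall>i\<in>{..2}. \<omega> i \<in> X i} = (\<Prod>i\<in>{..2}. emeasure gumbel (X i))"
    using product_prob_space.emeasure_PiM_Collect[OF pps, of "{..2}" "{..2}" X] assms by simp
  also have "\<dots> = ennreal (\<Prod>i\<in>{..2}. measure gumbel (X i))"
    by (simp add: gumbel.emeasure_eq_measure prod_ennreal)
  finally have "measure NN {\<omega> \<in> space NN. \<forall>i\<in>{..2}. \<omega> i \<in> X i} = (\<Prod>i\<in>{..2}. measure gumbel (X i))"
    by (simp add: NN.emeasure_eq_measure prod_nonneg)
  thus ?thesis by (simp add: atMost2)
qed

lemma util_Max2: "Max (util [a, b] \<omega> ` {..2}) = max (\<omega> 0) (max (a + \<omega> 1) (b + \<omega> 2))"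
  by (simp add: atMost2 util_def)

lemma space_NN: "space NN = {..2} \<rightarrow>\<^sub>E UNIV"
  by (simp add: space_PiM)

lemma borel_measurable_gumbel: "borel_measurable gumbel = borel_measurable borel"
  by (rule measurable_cong_sets) auto

lemma gumbel_id_measurable[measurable]: "(\<lambda>x. x) \<in> borel_measurable gumbel"
  by (simp add: borel_measurable_gumbel)

lemma comp_measurable[measurable]: "i \<le> 2 \<Longrightarrow> (\<lambda>\<omega>. \<omega> i) \<in> borel_measurable NN"
proof -
  assume i: "i \<le> 2"
  have "(\<lambda>\<omega>. \<omega> i) \<in> measurable NN gumbel"
    by (rule measurable_component_singleton) (use i in auto)
  thus ?thesis by (subst (asm) measurable_cong_sets[OF refl sets_gumbel])
qed

lemma distr_comp: "i \<le> 2 \<Longrightarrow> distr NN gumbel (\<lambda>\<omega>. \<omega> i) = gumbel"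
  by (rule distr_PiM_component) (auto simp: prob_space_gumbel)

lemma integrable_comp: "i \<le> 2 \<Longrightarrow> integrable NN (\<lambda>\<omega>. \<omega> i)"
proof -
  assume i: "i \<le> 2"
  have "integrable (distr NN gumbel (\<lambda>\<omega>. \<omega> i)) (\<lambda>x. x)"
    using i by (simp add: distr_comp integrable_gumbel_id)
  thus ?thesis using i by (subst (asm) integrable_distr_eq) auto
qed

lemma integrable_abs_comp: "i \<le> 2 \<Longrightarrow> integrable NN (\<lambda>\<omega>. \<bar>\<omega> i\<bar>)"
  using integrable_abs[OF integrable_comp] .

lemma integral_comp: "i \<le> 2 \<Longrightarrow> (\<integral>\<omega>. \<omega> i \<partial>NN) = 0"
proof -
  assume i: "i \<le> 2"
  have "(\<integral>\<omega>. \<omega> i \<partial>NN) = (\<integral>x. x \<partial>distr NN gumbel (\<lambda>\<omega>. \<omega> i))"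
    using i by (subst integral_distr) auto
  thus ?thesis using i by (simp add: distr_comp integral_gumbel_id)
qed

definition LSE :: "real \<Rightarrow> real \<Rightarrow> real" where
  "LSE a b = ln (1 + exp a + exp b)"

lemma GC_prod: "GC x * GC (x - a) * GC (x - b) = GC (x - LSE a b)"
proof -
  define E where "E = exp (-(x + euler_mascheroni))"
  have ea: "exp (-(x - a + euler_mascheroni)) = exp a * E"
    unfolding E_def by (simp add: exp_add[symmetric] algebra_simps)
  have eb: "exp (-(x - b + euler_mascheroni)) = exp b * E"
    unfolding E_def by (simp add: exp_add[symmetric] algebra_simps)
  have el: "exp (-(x - LSE a b + euler_mascheroni)) = (1 + exp a + exp b) * E"
  proof -
    have "exp (-(x - LSE a b + euler_mascheroni)) = exp (LSE a b) * E"
      unfolding E_def by (simp add: exp_add[symmetric] algebra_simps)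
    also have "exp (LSE a b) = 1 + exp a + exp b"
      unfolding LSE_def by (simp add: add_pos_pos)
    finally show ?thesis .
  qed
  show ?thesis
    unfolding GC_def ea eb el E_def[symmetric] by (simp add: exp_add[symmetric] algebra_simps)
qed

lemma max_measurable[measurable]:
  "(\<lambda>\<omega>. max (\<omega> 0) (max (a + \<omega> 1) (b + \<omega> 2))) \<in> borel_measurable NN"
  by measurable

lemma cdf_max:
  "cdf (distr NN borel (\<lambda>\<omega>. max (\<omega> 0) (max (a + \<omega> 1) (b + \<omega> 2)))) x = GC (x - LSE a b)"
proof -
  let ?M = "\<lambda>\<omega>. max (\<omega> 0) (max (a + \<omega> 1) (b + \<omega> 2))"
  define Y where "Y i = (if i = 0 then {..x} else if i = 1 then {..x - a} else {..x - b})" for i :: nat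
  have "cdf (distr NN borel ?M) x = measure NN (?M -` {..x} \<inter> space NN)"
    unfolding cdf_def by (subst measure_distr) auto
  also have "?M -` {..x} \<inter> space NN = {\<omega> \<in> space NN. \<forall>i\<in>{..2}. \<omega> i \<in> Y i}"
    by (auto simp: Y_def atMost2)
  also have "measure NN \<dots> = measure gumbel (Y 0) * measure gumbel (Y 1) * measure gumbel (Y 2)"
    by (rule measure_NN_box) (simp add: Y_def)
  also have "\<dots> = GC x * GC (x - a) * GC (x - b)"
    by (simp add: Y_def measure_gumbel_atMost)
  finally show ?thesis by (simp add: GC_prod)
qed

lemma shift_measurable[measurable]: "(\<lambda>y. y + c) \<in> borel_measurable gumbel"
  by (simp add: borel_measurable_gumbel)

lemma cdf_shift: "cdf (distr gumbel borel (\<lambda>y. y + c)) x = GC (x - c)"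
proof -
  have "cdf (distr gumbel borel (\<lambda>y. y + c)) x = measure gumbel ((\<lambda>y. y + c) -` {..x} \<inter> space gumbel)"
    unfolding cdf_def by (subst measure_distr) auto
  also have "(\<lambda>y. y + c) -` {..x} \<inter> space gumbel = {..x - c}" by auto
  finally show ?thesis by (simp add: measure_gumbel_atMost)
qed

lemma distr_max:
  "distr NN borel (\<lambda>\<omega>. max (\<omega> 0) (max (a + \<omega> 1) (b + \<omega> 2))) =
   distr gumbel borel (\<lambda>y. y + LSE a b)"
proof (rule cdf_unique)
  show "cdf (distr NN borel (\<lambda>\<omega>. max (\<omega> 0) (max (a + \<omega> 1) (b + \<omega> 2)))) =
        cdf (distr gumbel borel (\<lambda>y. y + LSE a b))"
    by (rule ext) (simp only: cdf_max cdf_shift)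
qed (auto intro!: NN.real_distribution_distr gumbel.real_distribution_distr)

lemma util_step2: "util_step [a, b] = LSE a b"
proof -
  let ?M = "\<lambda>\<omega>. max (\<omega> 0) (max (a + \<omega> 1) (b + \<omega> 2))"
  have "util_step [a, b] = (\<integral>\<omega>. Max (util [a, b] \<omega> ` {..2}) \<partial>NN)"
    unfolding util_step_def noise_def by (simp add: numeral_2_eq_2)
  also have "\<dots> = (\<integral>\<omega>. ?M \<omega> \<partial>NN)"
    by (simp only: util_Max2)
  also have "\<dots> = (\<integral>x. x \<partial>distr NN borel ?M)"
    by (subst integral_distr) auto
  also have "\<dots> = (\<integral>x. x \<partial>distr gumbel borel (\<lambda>y. y + LSE a b))"
    by (simp only: distr_max)
  also have "\<dots> = (\<integral>y. y + LSE a b \<partial>gumbel)"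
    by (subst integral_distr) auto
  also have "\<dots> = (\<integral>y. y \<partial>gumbel) + LSE a b"
    using Bochner_Integration.integral_add[OF integrable_gumbel_id gumbel.integrable_const[of "LSE a b"]]
    using gumbel.prob_space by simp
  finally show ?thesis by (simp add: integral_gumbel_id)
qed


lemma len2: "length [a, b] = (2::nat)" by simp

lemma choice_prob2:
  "choice_prob [a, b] j = measure NN {\<omega> \<in> space NN. \<forall>i\<in>{..2}. i \<noteq> j \<longrightarrow> util [a, b] \<omega> i < util [a, b] \<omega> j}"
  unfolding choice_prob_def noise2 len2 ..

lemma prob_space_noise: "prob_space (noise vs)"
  unfolding noise_def by (rule prob_space_PiM) (simp add: prob_space_gumbel)

lemma choice_prob_nonneg: "0 \<le> choice_prob vs j"
  by (simp add: choice_prob_def)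

lemma choice_prob_le1: "choice_prob vs j \<le> 1"
  unfolding choice_prob_def by (rule prob_space.prob_le_1[OF prob_space_noise])

lemma eng_step2: "eng_step [a, b] = choice_prob [a, b] 1 + choice_prob [a, b] 2"
proof -
  have "{1..2::nat} = {1, 2}" by auto
  thus ?thesis unfolding eng_step_def len2 by simp
qed

lemma eng_step_bounds: "0 \<le> eng_step [a, b]" "eng_step [a, b] \<le> 2"
  using choice_prob_nonneg[of "[a,b]" 1] choice_prob_nonneg[of "[a,b]" 2]
    choice_prob_le1[of "[a,b]" 1] choice_prob_le1[of "[a,b]" 2]
  by (auto simp: eng_step2)

lemma ball3: "(\<forall>i\<in>{..2::nat}. P i) \<longleftrightarrow> P 0 \<and> P 1 \<and> P 2"
  by (auto simp: atMost2)

lemma choice_set_eq: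
  "{\<omega> \<in> space NN. \<forall>i\<in>{..2}. i \<noteq> j \<longrightarrow> util [a, b] \<omega> i < util [a, b] \<omega> j} =
   {\<omega> \<in> space NN. (0 \<noteq> j \<longrightarrow> util [a, b] \<omega> 0 < util [a, b] \<omega> j) \<and>
      (1 \<noteq> j \<longrightarrow> util [a, b] \<omega> 1 < util [a, b] \<omega> j) \<and> (2 \<noteq> j \<longrightarrow> util [a, b] \<omega> 2 < util [a, b] \<omega> j)}"
  by (simp only: ball3)

lemma choice_sets: "j \<le> 2 \<Longrightarrow>
  {\<omega> \<in> space NN. \<forall>i\<in>{..2}. i \<noteq> j \<longrightarrow> util [a, b] \<omega> i < util [a, b] \<omega> j} \<in> sets NN"
  unfolding choice_set_eq util_def by measurable

lemma box_sets: "(\<And>i. X i \<in> sets borel) \<Longrightarrow> {\<omega> \<in> space NN. \<forall>i\<in>{..2}. \<omega> i \<in> X i} \<in> sets NN"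
proof -
  assume X: "\<And>i. X i \<in> sets borel"
  note [measurable] = X[of 0] X[of 1] X[of 2]
  have "{\<omega> \<in> space NN. \<forall>i\<in>{..2}. \<omega> i \<in> X i} =
     ((\<lambda>\<omega>. \<omega> 0) -` X 0 \<inter> space NN) \<inter> ((\<lambda>\<omega>. \<omega> 1) -` X 1 \<inter> space NN) \<inter> ((\<lambda>\<omega>. \<omega> 2) -` X 2 \<inter> space NN)"
    unfolding ball3 by blast
  also have "\<dots> \<in> sets NN"
    by (intro sets.Int measurable_sets[OF comp_measurable] X) auto
  finally show ?thesis .
qed

lemma cp_ge_box:
  fixes X :: "nat \<Rightarrow> real set"
  assumes X: "\<And>i. X i \<in> sets borel" and j: "j \<le> 2"
    and sub: "\<And>\<omega>. \<omega> 0 \<in> X 0 \<Longrightarrow> \<omega> 1 \<in> X 1 \<Longrightarrow> \<omega> 2 \<in> X 2 \<Longrightarrow>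
                (0 \<noteq> j \<longrightarrow> util [a, b] \<omega> 0 < util [a, b] \<omega> j) \<and>
                (1 \<noteq> j \<longrightarrow> util [a, b] \<omega> 1 < util [a, b] \<omega> j) \<and>
                (2 \<noteq> j \<longrightarrow> util [a, b] \<omega> 2 < util [a, b] \<omega> j)"
  shows "measure gumbel (X 0) * measure gumbel (X 1) * measure gumbel (X 2) \<le> choice_prob [a, b] j"
proof -
  have "measure gumbel (X 0) * measure gumbel (X 1) * measure gumbel (X 2) =
        measure NN {\<omega> \<in> space NN. \<forall>i\<in>{..2}. \<omega> i \<in> X i}"
    by (rule measure_NN_box[symmetric]) (rule X)
  also have "\<dots> \<le> choice_prob [a, b] j"
    unfolding choice_prob2
  proof (rule NN.finite_measure_mono[OF _ choice_sets[OF j]])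
    show "{\<omega> \<in> space NN. \<forall>i\<in>{..2}. \<omega> i \<in> X i} \<subseteq>
          {\<omega> \<in> space NN. \<forall>i\<in>{..2}. i \<noteq> j \<longrightarrow> util [a, b] \<omega> i < util [a, b] \<omega> j}"
      unfolding ball3 using sub by blast
  qed
  finally show ?thesis .
qed

lemma e_pos: "0 < eng_step [a, a]"
proof -
  let ?X = "\<lambda>i::nat. if i = 0 then {..<a} else if i = 1 then {0<..} else {..<(0::real)}"
  have "measure gumbel (?X 0) * measure gumbel (?X 1) * measure gumbel (?X 2) \<le> choice_prob [a, a] 1"
    by (rule cp_ge_box) (auto simp: util_def)
  hence "GC a * (1 - GC 0) * GC 0 \<le> choice_prob [a, a] 1"
    by (simp add: measure_gumbel_lessThan measure_gumbel_greaterThan)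
  moreover have "0 < GC a * (1 - GC 0) * GC 0"
    using GC_bounds[of a] GC_bounds[of 0] by simp
  ultimately show ?thesis
    using choice_prob_nonneg[of "[a,a]" 2] by (simp add: eng_step2)
qed

lemma a_lt1: "choice_prob [a, -1] 2 < 1"
proof -
  define B where "B = {\<omega> \<in> space NN. \<forall>i\<in>{..2}. \<omega> i \<in> (if i = 0 then {0<..} else if i = 1 then UNIV else {..<(0::real)})}"
  have Bs: "B \<in> sets NN" unfolding B_def by (rule box_sets) auto
  have mB: "measure NN B = (1 - GC 0) * 1 * GC 0"
    unfolding B_def
    by (subst measure_NN_box) (auto simp: measure_gumbel_lessThan measure_gumbel_greaterThan
        gumbel.prob_space[unfolded space_gumbel])
  have "choice_prob [a, -1] 2 \<le> measure NN (space NN - B)"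
    unfolding choice_prob2
    by (rule NN.finite_measure_mono) (auto simp: B_def ball3 util_def)
  also have "\<dots> = 1 - measure NN B" using Bs by (rule NN.prob_compl)
  also have "\<dots> < 1" unfolding mB using GC_bounds[of 0] by simp
  finally show ?thesis .
qed

lemma c_lower:
  assumes VP: "VP \<ge> 0"
  shows "GC k * GC k * (1 - GC (k + VP - v)) \<le> choice_prob [VP, v] 2"
proof -
  let ?X = "\<lambda>i::nat. if i = 0 then {..k} else if i = 1 then {..k} else {k + VP - v<..}"
  have "measure gumbel (?X 0) * measure gumbel (?X 1) * measure gumbel (?X 2) \<le> choice_prob [VP, v] 2"
    by (rule cp_ge_box) (use VP in \<open>auto simp: util_def\<close>)
  thus ?thesis by (simp add: measure_gumbel_atMost measure_gumbel_greaterThan)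
qed

lemma half_lims: "filterlim (\<lambda>v::real. v / 2) at_top at_top" "filterlim (\<lambda>v::real. c - v / 2) at_bot at_top"
  by real_asymp+

lemma c_lim:
  assumes VP: "VP \<ge> 0"
  shows "((\<lambda>v. choice_prob [VP, v] 2) \<longlongrightarrow> 1) at_top"
proof (rule tendsto_sandwich)
  have e: "v / 2 + VP - v = VP - v / 2" for v :: real by simp
  have "((\<lambda>v. GC (v/2) * GC (v/2) * (1 - GC (VP - v/2))) \<longlongrightarrow> 1 * 1 * (1 - 0)) at_top"
    by (intro tendsto_intros filterlim_compose[OF GC_top half_lims(1)] filterlim_compose[OF GC_bot half_lims(2)])
  thus "((\<lambda>v. GC (v/2) * GC (v/2) * (1 - GC (v/2 + VP - v))) \<longlongrightarrow> 1) at_top"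
    by (simp add: e)
  have "GC (v/2) * GC (v/2) * (1 - GC (v/2 + VP - v)) \<le> choice_prob [VP, v] 2" for v
    by (rule c_lower[OF VP])
  thus "\<forall>\<^sub>F v in at_top. GC (v/2) * GC (v/2) * (1 - GC (v/2 + VP - v)) \<le> choice_prob [VP, v] 2"
    by (intro always_eventually allI)
  show "\<forall>\<^sub>F v in at_top. choice_prob [VP, v] 2 \<le> 1"
    by (simp add: choice_prob_le1)
qed auto


lemma rho_bounds: "0 < rho1 VP p" "rho1 VP p < 1" "0 < rho2 VP p" "rho2 VP p < 1"
  by (auto simp: rho1_def rho2_def add_pos_pos)

lemma post00: "0 < p \<Longrightarrow> post VP p 0 0 = p"
  by (simp add: post_def field_simps)

definition ratio :: "real \<Rightarrow> real \<Rightarrow> nat \<Rightarrow> nat \<Rightarrow> real" where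
  "ratio VP p S F = (rho2 VP p ^ S * (1 - rho2 VP p) ^ F) / (rho1 VP p ^ S * (1 - rho1 VP p) ^ F)"

lemma ratio_pos: "0 < ratio VP p S F"
  using rho_bounds[of VP p] by (simp add: ratio_def)

lemma post_ge_iff:
  assumes p: "0 < p" "p < 1"
  shows "p \<le> post VP p S F \<longleftrightarrow> ratio VP p S F \<le> 1"
proof -
  define R where "R = ratio VP p S F"
  have R: "R > 0" by (simp add: R_def ratio_pos)
  have k: "(1 - p) / p > 0" using p by simp
  have d: "1 + (1 - p) / p * R > 0" by (intro add_pos_pos zero_less_one mult_pos_pos k R)
  have post: "post VP p S F = inverse (1 + (1 - p) / p * R)"
    by (simp add: post_def R_def ratio_def)
  have "p \<le> inverse (1 + (1 - p) / p * R) \<longleftrightarrow> p * (1 + (1 - p) / p * R) \<le> 1"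
    using d by (simp add: field_simps)
  also have "p * (1 + (1 - p) / p * R) = p + (1 - p) * R" using p by (simp add: field_simps)
  also have "p + (1 - p) * R \<le> 1 \<longleftrightarrow> (1 - p) * R \<le> (1 - p) * 1" by (simp only: mult_1_right; linarith)
  also have "\<dots> \<longleftrightarrow> R \<le> 1" using p by (intro mult_le_cancel_left_pos) simp
  finally show ?thesis by (simp add: post R_def)
qed

lemma ratio_F0_le: "rho2 VP p \<le> rho1 VP p \<Longrightarrow> ratio VP p S 0 \<le> 1"
  using rho_bounds[of VP p]
  by (simp add: ratio_def divide_le_eq_1 power_mono)

lemma ratio_gt1:
  assumes le: "rho2 VP p \<le> rho1 VP p" and F: "F \<ge> 1" and S: "S \<le> T"
    and small: "1 - rho1 VP p < rho2 VP p ^ T * (1 - rho2 VP p)"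
  shows "1 < ratio VP p S F"
proof -
  note rb = rho_bounds[of VP p]
  define r1 r2 where "r1 = rho1 VP p" and "r2 = rho2 VP p"
  have r: "0 < r1" "r1 < 1" "0 < r2" "r2 < 1" "r2 \<le> r1" using rb le by (simp_all add: r1_def r2_def)
  have "r2 ^ T \<le> r2 ^ S" using r S by (intro power_decreasing) auto
  also have "r2 ^ S \<le> r2 ^ S / r1 ^ S"
  proof -
    have "r1 ^ S \<le> 1" "0 < r1 ^ S" "0 \<le> r2 ^ S" using r by (auto intro: power_le_one)
    hence "r2 ^ S * r1 ^ S \<le> r2 ^ S" by (simp add: mult_left_le)
    thus ?thesis using \<open>0 < r1 ^ S\<close> by (simp add: le_divide_eq)
  qed
  finally have A: "r2 ^ T \<le> r2 ^ S / r1 ^ S" .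
  have q1: "1 \<le> (1 - r2) / (1 - r1)" using r by simp
  have "(1 - r2) / (1 - r1) = ((1 - r2) / (1 - r1)) ^ 1" by simp
  also have "\<dots> \<le> ((1 - r2) / (1 - r1)) ^ F" using q1 F by (intro power_increasing) auto
  finally have B: "(1 - r2) / (1 - r1) \<le> ((1 - r2) / (1 - r1)) ^ F" .
  have "1 < r2 ^ T * ((1 - r2) / (1 - r1))" using small r by (simp add: r1_def r2_def field_simps)
  also have "\<dots> \<le> (r2 ^ S / r1 ^ S) * (((1 - r2) / (1 - r1)) ^ F)"
    using A B r by (intro mult_mono) auto
  also have "\<dots> = ratio VP p S F"
    by (simp add: ratio_def r1_def r2_def power_divide)
  finally show ?thesis .
qed

lemma finite_step: "finite (set_pmf (pear_step VP p v x))"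
  by (cases x) (auto simp: pear_step_def)

lemma finite_ps: "finite (set_pmf (pear_state VP p v t))"
  by (induction t) (auto intro!: finite_step)

lemma ps_inv:
  assumes p: "0 < p"
  shows "x \<in> set_pmf (pear_state VP p v t) \<Longrightarrow>
    snd (snd x) = post VP p (fst x) (fst (snd x)) \<and> fst x + fst (snd x) \<le> t"
proof (induction t arbitrary: x)
  case 0
  thus ?case using post00[OF p] by simp
next
  case (Suc t)
  then obtain y where y: "y \<in> set_pmf (pear_state VP p v t)" and x: "x \<in> set_pmf (pear_step VP p v y)"
    by auto
  obtain S F q where yeq: "y = (S, F, q)" by (cases y) auto
  have "S + F \<le> t" using Suc.IH[OF y] yeq by simp
  thus ?case using x yeq by (auto simp: pear_step_def split: if_splits)
qed

lemma E_sum: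
  fixes h :: "'a \<Rightarrow> real"
  assumes "finite (set_pmf M)"
  shows "measure_pmf.expectation M h = (\<Sum>a\<in>set_pmf M. pmf M a * h a)"
  by (subst integral_measure_pmf_real[where A="set_pmf M"]) (auto simp: assms mult.commute)

lemma E_bind:
  fixes h :: "'b \<Rightarrow> real"
  assumes "finite (set_pmf M)" "\<And>x. finite (set_pmf (f x))"
  shows "measure_pmf.expectation (bind_pmf M f) h =
    (\<Sum>a\<in>set_pmf M. pmf M a * measure_pmf.expectation (f a) h)"
  using pmf_expectation_bind[of "set_pmf M" f M h] assms by simp


definition fz :: "nat \<times> nat \<times> real \<Rightarrow> real" where
  "fz x = (if fst (snd x) = 0 then 1 else 0)"

definition fx :: "real \<Rightarrow> nat \<times> nat \<times> real \<Rightarrow> real" where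
  "fx p x = (if p \<le> snd (snd x) then 1 else 0)"

lemma step_fz:
  assumes p: "0 < p" "p < 1" and le: "rho2 VP p \<le> rho1 VP p"
    and inv: "snd (snd x) = post VP p (fst x) (fst (snd x))"
  shows "measure_pmf.expectation (pear_step VP p v x) fz = choice_prob [VP, v] 2 * fz x"
proof -
  obtain S F q where x: "x = (S, F, q)" by (cases x) auto
  have q: "q = post VP p S F" using inv x by simp
  note c = choice_prob_nonneg[of "[VP, v]" 2] choice_prob_le1[of "[VP, v]" 2]
  show ?thesis
  proof (cases "F = 0")
    case True
    have "p \<le> q" unfolding q True using post_ge_iff[OF p] ratio_F0_le[OF le] by simp
    thus ?thesis using True c by (simp add: x pear_step_def fz_def)
  next
    case False
    thus ?thesis using c by (simp add: x pear_step_def fz_def)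
  qed
qed

lemma Z_formula:
  assumes p: "0 < p" "p < 1" and le: "rho2 VP p \<le> rho1 VP p"
  shows "measure_pmf.expectation (pear_state VP p v t) fz = choice_prob [VP, v] 2 ^ t"
proof (induction t)
  case 0
  thus ?case by (simp add: fz_def)
next
  case (Suc t)
  let ?M = "pear_state VP p v t"
  have "measure_pmf.expectation (pear_state VP p v (Suc t)) fz =
        (\<Sum>a\<in>set_pmf ?M. pmf ?M a * measure_pmf.expectation (pear_step VP p v a) fz)"
    by (simp add: E_bind finite_ps finite_step)
  also have "\<dots> = (\<Sum>a\<in>set_pmf ?M. pmf ?M a * (choice_prob [VP, v] 2 * fz a))"
    by (intro sum.cong refl) (simp add: step_fz[OF p le] ps_inv[OF p(1)])
  also have "\<dots> = choice_prob [VP, v] 2 * (\<Sum>a\<in>set_pmf ?M. pmf ?M a * fz a)"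
    by (simp add: sum_distrib_left mult_ac)
  also have "(\<Sum>a\<in>set_pmf ?M. pmf ?M a * fz a) = measure_pmf.expectation ?M fz"
    by (simp add: E_sum finite_ps)
  finally show ?case using Suc.IH by simp
qed

lemma fz_le_fx:
  assumes p: "0 < p" "p < 1" and le: "rho2 VP p \<le> rho1 VP p"
    and x: "x \<in> set_pmf (pear_state VP p v t)"
  shows "fz x \<le> fx p x"
proof -
  obtain S F q where xe: "x = (S, F, q)" by (cases x) auto
  have q: "q = post VP p S F" using ps_inv[OF p(1) x] xe by simp
  show ?thesis
  proof (cases "F = 0")
    case True
    have "p \<le> q" unfolding q True using post_ge_iff[OF p] ratio_F0_le[OF le] by simp
    thus ?thesis by (simp add: xe fx_def fz_def)
  qed (simp add: xe fx_def fz_def)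
qed

lemma fz_eq_fx:
  assumes p: "0 < p" "p < 1" and le: "rho2 VP p \<le> rho1 VP p"
    and small: "1 - rho1 VP p < rho2 VP p ^ T * (1 - rho2 VP p)" and tT: "t \<le> T"
    and x: "x \<in> set_pmf (pear_state VP p v t)"
  shows "fz x = fx p x"
proof -
  obtain S F q where xe: "x = (S, F, q)" by (cases x) auto
  have q: "q = post VP p S F" and ST: "S + F \<le> t" using ps_inv[OF p(1) x] xe by simp_all
  show ?thesis
  proof (cases "F = 0")
    case True
    have "p \<le> q" unfolding q True using post_ge_iff[OF p] ratio_F0_le[OF le] by simp
    thus ?thesis using True by (simp add: xe fx_def fz_def)
  next
    case False
    have "1 < ratio VP p S F" by (rule ratio_gt1[OF le _ _ small]) (use False ST tT in auto)
    hence "\<not> p \<le> q" unfolding q using post_ge_iff[OF p] by simp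
    thus ?thesis using False by (simp add: xe fx_def fz_def)
  qed
qed

lemma X_bounds:
  assumes p: "0 < p" "p < 1" and le: "rho2 VP p \<le> rho1 VP p"
  shows "choice_prob [VP, v] 2 ^ t \<le> measure_pmf.expectation (pear_state VP p v t) (fx p)"
    "measure_pmf.expectation (pear_state VP p v t) (fx p) \<le> 1"
proof -
  let ?M = "pear_state VP p v t"
  have "choice_prob [VP, v] 2 ^ t = (\<Sum>a\<in>set_pmf ?M. pmf ?M a * fz a)"
    using Z_formula[OF p le, of v t] by (simp add: E_sum finite_ps)
  also have "\<dots> \<le> (\<Sum>a\<in>set_pmf ?M. pmf ?M a * fx p a)"
    by (intro sum_mono mult_left_mono fz_le_fx[OF p le]) auto
  also have "\<dots> = measure_pmf.expectation ?M (fx p)" by (simp add: E_sum finite_ps)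
  finally show "choice_prob [VP, v] 2 ^ t \<le> measure_pmf.expectation ?M (fx p)" .
  have "measure_pmf.expectation ?M (fx p) = (\<Sum>a\<in>set_pmf ?M. pmf ?M a * fx p a)"
    by (simp add: E_sum finite_ps)
  also have "\<dots> \<le> (\<Sum>a\<in>set_pmf ?M. pmf ?M a)"
    by (intro sum_mono) (auto simp: fx_def)
  also have "\<dots> = 1" by (simp add: sum_pmf_eq_1 finite_ps)
  finally show "measure_pmf.expectation ?M (fx p) \<le> 1" .
qed

lemma X_nonneg: "0 \<le> measure_pmf.expectation (pear_state VP p v t) (fx p)"
  by (rule integral_nonneg_AE) (auto simp: fx_def)

lemma X_eq:
  assumes p: "0 < p" "p < 1" and le: "rho2 VP p \<le> rho1 VP p"
    and small: "1 - rho1 VP p < rho2 VP p ^ T * (1 - rho2 VP p)" and tT: "t \<le> T"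
  shows "measure_pmf.expectation (pear_state VP p v t) (fx p) = choice_prob [VP, v] 2 ^ t"
proof -
  let ?M = "pear_state VP p v t"
  have "measure_pmf.expectation ?M (fx p) = (\<Sum>a\<in>set_pmf ?M. pmf ?M a * fx p a)"
    by (simp add: E_sum finite_ps)
  also have "\<dots> = (\<Sum>a\<in>set_pmf ?M. pmf ?M a * fz a)"
    by (intro sum.cong refl) (simp add: fz_eq_fx[OF p le small tT])
  also have "\<dots> = measure_pmf.expectation ?M fz" by (simp add: E_sum finite_ps)
  finally show ?thesis using Z_formula[OF p le] by simp
qed

lemma E_offer:
  fixes h :: "real list \<Rightarrow> real"
  shows "measure_pmf.expectation (pear_state VP p v t) (\<lambda>(S, F, q). h (pear_offer VP p v q)) =
    measure_pmf.expectation (pear_state VP p v t) (fx p) * h [VP, v] +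
    (1 - measure_pmf.expectation (pear_state VP p v t) (fx p)) * h [VP, VP]"
proof -
  let ?M = "pear_state VP p v t"
  have "measure_pmf.expectation ?M (\<lambda>(S, F, q). h (pear_offer VP p v q)) =
        (\<Sum>a\<in>set_pmf ?M. pmf ?M a * (fx p a * (h [VP, v] - h [VP, VP]) + h [VP, VP]))"
    by (simp add: E_sum finite_ps) (intro sum.cong refl, auto simp: fx_def pear_offer_def split: prod.splits)
  also have "\<dots> = (\<Sum>a\<in>set_pmf ?M. (pmf ?M a * fx p a) * (h [VP, v] - h [VP, VP])) +
       (\<Sum>a\<in>set_pmf ?M. pmf ?M a * h [VP, VP])"
    by (simp only: distrib_left mult.assoc sum.distrib)
  also have "\<dots> = (\<Sum>a\<in>set_pmf ?M. pmf ?M a * fx p a) * (h [VP, v] - h [VP, VP]) +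
       (\<Sum>a\<in>set_pmf ?M. pmf ?M a) * h [VP, VP]"
    by (simp only: sum_distrib_right)
  also have "(\<Sum>a\<in>set_pmf ?M. pmf ?M a) = 1" by (simp add: sum_pmf_eq_1 finite_ps)
  also have "(\<Sum>a\<in>set_pmf ?M. pmf ?M a * fx p a) = measure_pmf.expectation ?M (fx p)"
    by (simp add: E_sum finite_ps)
  finally show ?thesis by (simp add: algebra_simps)
qed


abbreviation XX :: "real \<Rightarrow> real \<Rightarrow> real \<Rightarrow> nat \<Rightarrow> real" where
  "XX VP p v t \<equiv> measure_pmf.expectation (pear_state VP p v t) (fx p)"

lemma X_le1: "XX VP p v t \<le> 1"
proof -
  let ?M = "pear_state VP p v t"
  have "measure_pmf.expectation ?M (fx p) = (\<Sum>a\<in>set_pmf ?M. pmf ?M a * fx p a)"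
    by (simp add: E_sum finite_ps)
  also have "\<dots> \<le> (\<Sum>a\<in>set_pmf ?M. pmf ?M a)"
    by (intro sum_mono) (auto simp: fx_def)
  also have "\<dots> = 1" by (simp add: sum_pmf_eq_1 finite_ps)
  finally show ?thesis .
qed

lemma w_lim: "filterlim (\<lambda>p::real. (1 - p) / p) at_top (at_right 0)"
  by real_asymp

lemma rho1_aux: "((\<lambda>w::real. exp w / (1 + exp VP + exp w)) \<longlongrightarrow> 1) at_top"
  by real_asymp

lemma rho1_lim: "((\<lambda>p. rho1 VP p) \<longlongrightarrow> 1) (at_right 0)"
proof -
  have "((\<lambda>p. (\<lambda>w. exp w / (1 + exp VP + exp w)) ((1 - p) / p)) \<longlongrightarrow> 1) (at_right 0)"
    by (rule filterlim_compose[OF rho1_aux[of VP] w_lim])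
  thus ?thesis by (simp add: rho1_def)
qed

lemma rho2_const: "rho2 VP p = rho2 VP 0"
  by (simp add: rho2_def)

lemma ev_small:
  "eventually (\<lambda>p. 0 < p \<and> p < 1 \<and> rho2 VP p \<le> rho1 VP p \<and>
      1 - rho1 VP p < rho2 VP p ^ T * (1 - rho2 VP p)) (at_right 0)"
proof -
  define r2 where "r2 = rho2 VP 0"
  have r2: "0 < r2" "r2 < 1" using rho_bounds[of VP 0] by (simp_all add: r2_def)
  have e1: "eventually (\<lambda>p::real. p \<in> {0<..<1}) (at_right 0)"
    by (rule eventually_at_right_real) simp
  have e2: "eventually (\<lambda>p. r2 < rho1 VP p) (at_right 0)"
    using order_tendstoD(1)[OF rho1_lim r2(2)] .
  have l: "((\<lambda>p. 1 - rho1 VP p) \<longlongrightarrow> 1 - 1) (at_right 0)"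
    by (intro tendsto_intros rho1_lim)
  have pos: "0 < r2 ^ T * (1 - r2)" using r2 by simp
  have e3: "eventually (\<lambda>p. 1 - rho1 VP p < r2 ^ T * (1 - r2)) (at_right 0)"
    using order_tendstoD(2)[OF l] pos by simp
  show ?thesis
    using e1 e2 e3 by eventually_elim (auto simp: r2_def rho2_def)
qed

lemma lim_neg:
  fixes h :: "real list \<Rightarrow> real" and VP :: real
  assumes d: "0 < \<delta>" "\<delta> < 1"
  defines "a \<equiv> choice_prob [VP, -1] 2"
  shows "((\<lambda>p. \<Sum>t. \<delta> ^ t * measure_pmf.expectation (pear_state VP p (-1) t)
            (\<lambda>(S, F, q). h (pear_offer VP p (-1) q))) \<longlongrightarrow>
          (\<Sum>t. \<delta> ^ t * (a ^ t * h [VP, -1] + (1 - a ^ t) * h [VP, VP]))) (at_right 0)"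
proof -
  define A where "A t p = \<delta> ^ t * (XX VP p (-1) t * h [VP, -1] + (1 - XX VP p (-1) t) * h [VP, VP])" for t p
  have eq: "(\<lambda>p. \<Sum>t. \<delta> ^ t * measure_pmf.expectation (pear_state VP p (-1) t)
            (\<lambda>(S, F, q). h (pear_offer VP p (-1) q))) = (\<lambda>p. \<Sum>t. A t p)"
    by (simp add: E_offer A_def)
  have lim: "((\<lambda>p. A t p) \<longlongrightarrow> \<delta> ^ t * (a ^ t * h [VP, -1] + (1 - a ^ t) * h [VP, VP])) (at_right 0)" for t
  proof (rule tendsto_eventually)
    show "eventually (\<lambda>p. A t p = \<delta> ^ t * (a ^ t * h [VP, -1] + (1 - a ^ t) * h [VP, VP])) (at_right 0)"
      using ev_small[of VP t] by eventually_elim (auto simp: A_def a_def X_eq)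
  qed
  have bnd: "\<bar>A t p\<bar> \<le> \<delta> ^ t * (\<bar>h [VP, -1]\<bar> + \<bar>h [VP, VP]\<bar>)" for t p
  proof -
    have x: "0 \<le> XX VP p (-1) t" "XX VP p (-1) t \<le> 1" by (rule X_nonneg, rule X_le1)
    have "\<bar>XX VP p (-1) t * h [VP, -1] + (1 - XX VP p (-1) t) * h [VP, VP]\<bar>
          \<le> XX VP p (-1) t * \<bar>h [VP, -1]\<bar> + (1 - XX VP p (-1) t) * \<bar>h [VP, VP]\<bar>"
      using x by (intro order_trans[OF abs_triangle_ineq]) (simp add: abs_mult)
    also have "\<dots> \<le> 1 * \<bar>h [VP, -1]\<bar> + 1 * \<bar>h [VP, VP]\<bar>"
      using x by (intro add_mono mult_right_mono) auto
    finally show ?thesis using d by (simp add: A_def abs_mult mult_left_mono)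
  qed
  have summ: "summable (\<lambda>t. \<delta> ^ t * (\<bar>h [VP, -1]\<bar> + \<bar>h [VP, VP]\<bar>))"
    using d by (intro summable_mult2 summable_geometric) simp
  have "eventually (\<lambda>(t, p). norm (A t p) \<le> \<delta> ^ t * (\<bar>h [VP, -1]\<bar> + \<bar>h [VP, VP]\<bar>)) (at_top \<times>\<^sub>F at_right 0)"
    by (rule always_eventually) (simp add: case_prod_unfold bnd)
  from tannerys_theorem[OF lim this summ]
  have "((\<lambda>p. \<Sum>t. A t p) \<longlongrightarrow> (\<Sum>t. \<delta> ^ t * (a ^ t * h [VP, -1] + (1 - a ^ t) * h [VP, VP]))) (at_right 0)"
    by (simp only: trivial_limit_at_right_real not_False_eq_True)
  thus ?thesis unfolding eq .
qed

lemma conv_bound: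
  fixes X A B :: real
  assumes x: "0 \<le> X" "X \<le> 1"
  shows "\<bar>X * A + (1 - X) * B\<bar> \<le> \<bar>A\<bar> + \<bar>B\<bar>"
proof -
  have "\<bar>X * A + (1 - X) * B\<bar> \<le> X * \<bar>A\<bar> + (1 - X) * \<bar>B\<bar>"
    using x by (intro order_trans[OF abs_triangle_ineq]) (simp add: abs_mult)
  also have "\<dots> \<le> 1 * \<bar>A\<bar> + 1 * \<bar>B\<bar>"
    using x by (intro add_mono mult_right_mono) auto
  finally show ?thesis by simp
qed

lemma E_offer_bound:
  fixes h :: "real list \<Rightarrow> real"
  shows "\<bar>XX VP p v t * h [VP, v] + (1 - XX VP p v t) * h [VP, VP]\<bar> \<le> \<bar>h [VP, v]\<bar> + \<bar>h [VP, VP]\<bar>"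
proof -
  have x: "0 \<le> XX VP p v t" "XX VP p v t \<le> 1" by (rule X_nonneg, rule X_le1)
  have "\<bar>XX VP p v t * h [VP, v] + (1 - XX VP p v t) * h [VP, VP]\<bar>
        \<le> XX VP p v t * \<bar>h [VP, v]\<bar> + (1 - XX VP p v t) * \<bar>h [VP, VP]\<bar>"
    using x by (intro order_trans[OF abs_triangle_ineq]) (simp add: abs_mult)
  also have "\<dots> \<le> 1 * \<bar>h [VP, v]\<bar> + 1 * \<bar>h [VP, VP]\<bar>"
    using x by (intro add_mono mult_right_mono) auto
  finally show ?thesis by simp
qed

lemma given_eq:
  fixes h :: "real list \<Rightarrow> real"
  shows "(\<Sum>t. \<delta> ^ t * measure_pmf.expectation (pear_state VP p v t) (\<lambda>(S, F, q). h (pear_offer VP p v q))) =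
         (\<Sum>t. \<delta> ^ t * (XX VP p v t * h [VP, v] + (1 - XX VP p v t) * h [VP, VP]))"
  by (simp add: E_offer)

lemma given_summable:
  fixes h :: "real list \<Rightarrow> real"
  assumes d: "0 < \<delta>" "\<delta> < 1"
  shows "summable (\<lambda>t. \<delta> ^ t * (XX VP p v t * h [VP, v] + (1 - XX VP p v t) * h [VP, VP]))"
proof (rule summable_comparison_test)
  show "summable (\<lambda>t. \<delta> ^ t * (\<bar>h [VP, v]\<bar> + \<bar>h [VP, VP]\<bar>))"
    using d by (intro summable_mult2 summable_geometric) simp
  show "\<exists>N. \<forall>n\<ge>N. norm (\<delta> ^ n * (XX VP p v n * h [VP, v] + (1 - XX VP p v n) * h [VP, VP]))
      \<le> \<delta> ^ n * (\<bar>h [VP, v]\<bar> + \<bar>h [VP, VP]\<bar>)"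
    using d E_offer_bound[of VP p v _ h] by (auto simp: abs_mult intro!: mult_left_mono)
qed

lemma pLSE_lim: "((\<lambda>p::real. p * LSE VP ((1 - p) / p)) \<longlongrightarrow> 1) (at_right 0)"
  unfolding LSE_def by real_asymp

lemma c_lim_p:
  assumes VP: "VP \<ge> 0"
  shows "((\<lambda>p. choice_prob [VP, (1 - p) / p] 2) \<longlongrightarrow> 1) (at_right 0)"
  by (rule filterlim_compose[OF c_lim[OF VP] w_lim])

lemma X_lim_pos:
  assumes VP: "VP \<ge> 0"
  shows "((\<lambda>p. XX VP p ((1 - p) / p) t) \<longlongrightarrow> 1) (at_right 0)"
proof (rule tendsto_sandwich)
  show "eventually (\<lambda>p. choice_prob [VP, (1 - p) / p] 2 ^ t \<le> XX VP p ((1 - p) / p) t) (at_right 0)"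
    using ev_small[of VP 0] by eventually_elim (auto intro!: X_bounds(1))
  show "eventually (\<lambda>p. XX VP p ((1 - p) / p) t \<le> 1) (at_right 0)"
    by (intro always_eventually allI X_le1)
  have "((\<lambda>p. choice_prob [VP, (1 - p) / p] 2 ^ t) \<longlongrightarrow> 1 ^ t) (at_right 0)"
    by (intro tendsto_intros c_lim_p[OF VP])
  thus "((\<lambda>p. choice_prob [VP, (1 - p) / p] 2 ^ t) \<longlongrightarrow> 1) (at_right 0)" by simp
qed simp

lemma lim_pos_util:
  assumes VP: "VP \<ge> 0" and d: "0 < \<delta>" "\<delta> < 1"
  shows "((\<lambda>p. p * util_pear_given VP \<delta> p ((1 - p) / p)) \<longlongrightarrow> 1 / (1 - \<delta>)) (at_right 0)"
proof -
  define u where "u = LSE VP VP"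
  define A where "A t p = \<delta> ^ t * (XX VP p ((1 - p) / p) t * (p * LSE VP ((1 - p) / p)) +
      (1 - XX VP p ((1 - p) / p) t) * (p * u))" for t p
  have eq: "p * util_pear_given VP \<delta> p ((1 - p) / p) = (\<Sum>t. A t p)" for p
  proof -
    have "util_pear_given VP \<delta> p ((1 - p) / p) =
      (\<Sum>t. \<delta> ^ t * (XX VP p ((1 - p) / p) t * util_step [VP, (1 - p) / p] +
         (1 - XX VP p ((1 - p) / p) t) * util_step [VP, VP]))"
      unfolding util_pear_given_def by (rule given_eq)
    also have "\<dots> = (\<Sum>t. \<delta> ^ t * (XX VP p ((1 - p) / p) t * LSE VP ((1 - p) / p) +
         (1 - XX VP p ((1 - p) / p) t) * u))"
      by (simp add: util_step2 u_def)
    finally have "p * util_pear_given VP \<delta> p ((1 - p) / p) = p * (\<Sum>t. \<delta> ^ t * (XX VP p ((1 - p) / p) t * LSE VP ((1 - p) / p) +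
         (1 - XX VP p ((1 - p) / p) t) * u))" by simp
    also have "\<dots> = (\<Sum>t. p * (\<delta> ^ t * (XX VP p ((1 - p) / p) t * LSE VP ((1 - p) / p) +
         (1 - XX VP p ((1 - p) / p) t) * u)))"
      using given_summable[OF d, of VP p "(1 - p) / p" "\<lambda>l. if l = [VP, VP] then u else LSE VP ((1 - p) / p)"]
      by (subst suminf_mult) (auto simp: u_def split: if_splits)
    also have "\<dots> = (\<Sum>t. A t p)"
      by (simp add: A_def algebra_simps)
    finally show ?thesis .
  qed
  have lim: "((\<lambda>p. A t p) \<longlongrightarrow> \<delta> ^ t * (1 * 1 + (1 - 1) * (0 * u))) (at_right 0)" for t
    unfolding A_def
    by (intro tendsto_intros X_lim_pos[OF VP] pLSE_lim)
  have ev1: "eventually (\<lambda>p. \<bar>p * LSE VP ((1 - p) / p)\<bar> < 2) (at_right 0)"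
  proof -
    have "((\<lambda>p. \<bar>p * LSE VP ((1 - p) / p)\<bar>) \<longlongrightarrow> \<bar>1\<bar>) (at_right 0)"
      by (intro tendsto_intros pLSE_lim)
    from order_tendstoD(2)[OF this, of 2] show ?thesis by simp
  qed
  have ev2: "eventually (\<lambda>p::real. \<bar>p * u\<bar> < 1) (at_right 0)"
  proof -
    have "((\<lambda>p::real. \<bar>p * u\<bar>) \<longlongrightarrow> \<bar>0 * u\<bar>) (at_right 0)"
      by (intro tendsto_intros)
    from order_tendstoD(2)[OF this, of 1] show ?thesis by simp
  qed
  have bnd: "eventually (\<lambda>p. \<forall>t. \<bar>A t p\<bar> \<le> \<delta> ^ t * 3) (at_right 0)"
    using ev1 ev2
  proof eventually_elim
    case (elim p)
    show ?case
    proof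
      fix t
      have "\<bar>XX VP p ((1 - p) / p) t * (p * LSE VP ((1 - p) / p)) + (1 - XX VP p ((1 - p) / p) t) * (p * u)\<bar>
            \<le> \<bar>p * LSE VP ((1 - p) / p)\<bar> + \<bar>p * u\<bar>"
        by (intro conv_bound X_nonneg X_le1)
      also have "\<dots> \<le> 3" using elim by simp
      finally show "\<bar>A t p\<bar> \<le> \<delta> ^ t * 3" using d
        by (simp add: A_def abs_mult mult_left_mono)
    qed
  qed
  have bnd': "eventually (\<lambda>(t, p). norm (A t p) \<le> \<delta> ^ t * 3) (at_top \<times>\<^sub>F at_right 0)"
    using eventually_prodI[OF always_eventually[of "\<lambda>_::nat. True"] bnd]
    by (rule eventually_mono) auto
  have summ: "summable (\<lambda>t. \<delta> ^ t * (3::real))"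
    using d by (intro summable_mult2 summable_geometric) simp
  from tannerys_theorem[OF lim bnd' summ]
  have "((\<lambda>p. \<Sum>t. A t p) \<longlongrightarrow> (\<Sum>t. \<delta> ^ t * (1 * 1 + (1 - 1) * (0 * u)))) (at_right 0)"
    by (simp only: trivial_limit_at_right_real not_False_eq_True)
  moreover have "(\<Sum>t. \<delta> ^ t * (1 * 1 + (1 - 1) * (0 * u))) = 1 / (1 - \<delta>)"
    using d by (simp add: suminf_geometric)
  ultimately show ?thesis unfolding eq by simp
qed


lemma geo_mix:
  fixes \<delta> a X Y :: real
  assumes d: "0 < \<delta>" "\<delta> < 1" and a: "0 \<le> a" "a < 1"
  shows "(\<lambda>t. \<delta> ^ t * (a ^ t * X + (1 - a ^ t) * Y)) sums ((X - Y) / (1 - \<delta> * a) + Y / (1 - \<delta>))"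
proof -
  have da: "\<bar>\<delta> * a\<bar> < 1"
  proof -
    have "\<delta> * a \<le> 1 * a" using d a by (intro mult_right_mono) auto
    thus ?thesis using d a by (simp add: abs_mult)
  qed
  have "(\<lambda>t. (\<delta> * a) ^ t * (X - Y) + \<delta> ^ t * Y) sums (1 / (1 - \<delta> * a) * (X - Y) + 1 / (1 - \<delta>) * Y)"
  proof -
    have g1: "(\<lambda>t. (\<delta> * a) ^ t) sums (1 / (1 - \<delta> * a))"
      by (rule geometric_sums) (use da in simp)
    have g2: "(\<lambda>t. \<delta> ^ t) sums (1 / (1 - \<delta>))"
      by (rule geometric_sums) (use d in simp)
    show ?thesis by (rule sums_add[OF sums_mult2[OF g1] sums_mult2[OF g2]])
  qed
  moreover have "(\<lambda>t. (\<delta> * a) ^ t * (X - Y) + \<delta> ^ t * Y) = (\<lambda>t. \<delta> ^ t * (a ^ t * X + (1 - a ^ t) * Y))"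
    by (rule ext) (simp add: power_mult_distrib algebra_simps)
  ultimately show ?thesis by simp
qed

lemma APP_geo: "0 < \<delta> \<Longrightarrow> \<delta> < 1 \<Longrightarrow> (\<Sum>t. \<delta> ^ t * c) = c / (1 - (\<delta>::real))"
proof -
  assume d: "0 < \<delta>" "\<delta> < 1"
  have g2: "(\<lambda>t. \<delta> ^ t) sums (1 / (1 - \<delta>))"
    by (rule geometric_sums) (use d in simp)
  from sums_unique[OF sums_mult2[OF g2, of c]] show ?thesis by simp
qed


lemma given_abs_bound:
  fixes h :: "real list \<Rightarrow> real"
  assumes d: "0 < \<delta>" "\<delta> < 1" and hb: "\<bar>h [VP, v]\<bar> \<le> B" "\<bar>h [VP, VP]\<bar> \<le> B"
  shows "\<bar>\<Sum>t. \<delta> ^ t * (XX VP p v t * h [VP, v] + (1 - XX VP p v t) * h [VP, VP])\<bar> \<le> 2 * B / (1 - \<delta>)"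
proof -
  let ?f = "\<lambda>t. \<delta> ^ t * (XX VP p v t * h [VP, v] + (1 - XX VP p v t) * h [VP, VP])"
  have b: "\<bar>?f t\<bar> \<le> \<delta> ^ t * (2 * B)" for t
  proof -
    have "\<bar>XX VP p v t * h [VP, v] + (1 - XX VP p v t) * h [VP, VP]\<bar> \<le> \<bar>h [VP, v]\<bar> + \<bar>h [VP, VP]\<bar>"
      by (intro conv_bound X_nonneg X_le1)
    also have "\<dots> \<le> 2 * B" using hb by simp
    finally show ?thesis using d by (simp add: abs_mult mult_left_mono)
  qed
  have s2: "summable (\<lambda>t. \<delta> ^ t * (2 * B))"
    using d by (intro summable_mult2 summable_geometric) simp
  have s1: "summable (\<lambda>t. \<bar>?f t\<bar>)"
    by (rule summable_comparison_test[OF _ s2]) (use b in auto)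
  have "\<bar>suminf ?f\<bar> \<le> (\<Sum>t. \<bar>?f t\<bar>)"
    using summable_norm[of ?f] s1 by simp
  also have "\<dots> \<le> (\<Sum>t. \<delta> ^ t * (2 * B))"
    by (rule suminf_le[OF b s1 s2])
  also have "\<dots> = 2 * B / (1 - \<delta>)"
    using APP_geo[OF d, of "2 * B"] by simp
  finally show ?thesis .
qed

lemma eng_step_abs: "\<bar>eng_step [a, b]\<bar> \<le> 2"
  using eng_step_bounds[of a b] by simp

lemma eng_pos_lim:
  assumes d: "0 < \<delta>" "\<delta> < 1"
  shows "((\<lambda>p. p * eng_pear_given VP \<delta> p ((1 - p) / p)) \<longlongrightarrow> 0) (at_right 0)"
proof (rule tendsto_0_le[where f = "\<lambda>p. p" and K = "2 * 2 / (1 - \<delta>)"])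
  show "((\<lambda>p::real. p) \<longlongrightarrow> 0) (at_right 0)" by (rule tendsto_ident_at)
  have b: "\<bar>eng_pear_given VP \<delta> p ((1 - p) / p)\<bar> \<le> 2 * 2 / (1 - \<delta>)" for p
    unfolding eng_pear_given_def given_eq
    by (rule given_abs_bound[OF d]) (rule eng_step_abs)+
  show "eventually (\<lambda>p. norm (p * eng_pear_given VP \<delta> p ((1 - p) / p)) \<le> norm p * (2 * 2 / (1 - \<delta>))) (at_right 0)"
  proof (rule always_eventually, rule allI)
    fix p :: real
    show "norm (p * eng_pear_given VP \<delta> p ((1 - p) / p)) \<le> norm p * (2 * 2 / (1 - \<delta>))"
      unfolding real_norm_def abs_mult by (rule mult_left_mono[OF b]) simp
  qed
qed

lemma eng_neg_lim:
  assumes d: "0 < \<delta>" "\<delta> < 1"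
  shows "((\<lambda>p. eng_pear_given VP \<delta> p (-1)) \<longlongrightarrow>
     (\<Sum>t. \<delta> ^ t * (choice_prob [VP, -1] 2 ^ t * eng_step [VP, -1] +
        (1 - choice_prob [VP, -1] 2 ^ t) * eng_step [VP, VP]))) (at_right 0)"
  unfolding eng_pear_given_def by (rule lim_neg[OF d])

lemma util_neg_lim:
  assumes d: "0 < \<delta>" "\<delta> < 1"
  shows "((\<lambda>p. util_pear_given VP \<delta> p (-1)) \<longlongrightarrow>
     (\<Sum>t. \<delta> ^ t * (choice_prob [VP, -1] 2 ^ t * util_step [VP, -1] +
        (1 - choice_prob [VP, -1] 2 ^ t) * util_step [VP, VP]))) (at_right 0)"
  unfolding util_pear_given_def by (rule lim_neg[OF d])


lemma eng_part:
  fixes VP :: real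
  assumes VP: "VP \<ge> 0"
  shows "\<exists>L. (\<forall>\<^sub>F \<delta> in at_left 1.
              ((\<lambda>p. Eng_PEAR VP \<delta> p / Eng_APP VP \<delta>) \<longlongrightarrow> L \<delta>) (at_right 0))
            \<and> (L \<longlongrightarrow> 1) (at_left 1)"
proof -
  define e where "e = eng_step [VP, VP]"
  define A1 where "A1 = eng_step [VP, -1]"
  define a where "a = choice_prob [VP, -1] 2"
  have e: "0 < e" unfolding e_def by (rule e_pos)
  have a: "0 \<le> a" "a < 1" unfolding a_def by (rule choice_prob_nonneg, rule a_lt1)
  define L where "L \<delta> = ((A1 - e) / (1 - \<delta> * a) + e / (1 - \<delta>)) / (e / (1 - \<delta>))" for \<delta> :: real
  have ev: "\<forall>\<^sub>F \<delta> in at_left 1. \<delta> \<in> {0<..<(1::real)}"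
    by (rule eventually_at_left_real) simp
  have da: "\<delta> * a < 1" if "\<delta> \<in> {0<..<(1::real)}" for \<delta>
  proof -
    have "\<delta> * a \<le> 1 * a" using that a by (intro mult_right_mono) auto
    thus ?thesis using a by simp
  qed
  have part1: "((\<lambda>p. Eng_PEAR VP \<delta> p / Eng_APP VP \<delta>) \<longlongrightarrow> L \<delta>) (at_right 0)"
    if d: "\<delta> \<in> {0<..<(1::real)}" for \<delta>
  proof -
    have d': "0 < \<delta>" "\<delta> < 1" using d by auto
    have app: "Eng_APP VP \<delta> = e / (1 - \<delta>)"
      unfolding Eng_APP_def e_def by (rule APP_geo[OF d'])
    have sm: "(\<Sum>t. \<delta> ^ t * (a ^ t * A1 + (1 - a ^ t) * e)) = (A1 - e) / (1 - \<delta> * a) + e / (1 - \<delta>)"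
      by (rule sums_unique[symmetric], rule geo_mix[OF d' a])
    have "((\<lambda>p. p * eng_pear_given VP \<delta> p ((1 - p) / p) + (1 - p) * eng_pear_given VP \<delta> p (-1))
          \<longlongrightarrow> 0 + (1 - 0) * ((A1 - e) / (1 - \<delta> * a) + e / (1 - \<delta>))) (at_right 0)"
      using eng_neg_lim[OF d', of VP] unfolding sm[unfolded A1_def e_def a_def]
      by (intro tendsto_intros eng_pos_lim[OF d']) (simp_all add: A1_def e_def a_def)
    hence "((\<lambda>p. Eng_PEAR VP \<delta> p) \<longlongrightarrow> (A1 - e) / (1 - \<delta> * a) + e / (1 - \<delta>)) (at_right 0)"
      by (simp add: Eng_PEAR_def)
    hence "((\<lambda>p. Eng_PEAR VP \<delta> p / (e / (1 - \<delta>))) \<longlongrightarrow> L \<delta>) (at_right 0)"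
      unfolding L_def by (rule tendsto_divide) (use e d' in auto)
    thus ?thesis by (simp add: app)
  qed
  have "((\<lambda>\<delta>. (1 - \<delta>) * (A1 - e) / ((1 - \<delta> * a) * e) + 1) \<longlongrightarrow> (1 - 1) * (A1 - e) / ((1 - 1 * a) * e) + 1) (at_left (1::real))"
    using a e by (intro tendsto_intros) auto
  hence lim1: "((\<lambda>\<delta>. (1 - \<delta>) * (A1 - e) / ((1 - \<delta> * a) * e) + 1) \<longlongrightarrow> 1) (at_left (1::real))"
    by simp
  have "\<forall>\<^sub>F \<delta> in at_left 1. (1 - \<delta>) * (A1 - e) / ((1 - \<delta> * a) * e) + 1 = L \<delta>"
    using ev
  proof eventually_elim
    case (elim \<delta>)
    have n: "1 - \<delta> \<noteq> 0" "1 - \<delta> * a \<noteq> 0" using elim da[OF elim] by auto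
    have Y: "e / (1 - \<delta>) \<noteq> 0" using e n by simp
    have "L \<delta> = ((A1 - e) / (1 - \<delta> * a)) / (e / (1 - \<delta>)) + 1"
    proof -
      have gen: "(X + Z) / Z = X / Z + 1" if "Z \<noteq> 0" for X Z :: real
        using that by (simp add: add_divide_distrib)
      show ?thesis unfolding L_def by (rule gen[OF Y])
    qed
    also have "((A1 - e) / (1 - \<delta> * a)) / (e / (1 - \<delta>)) = (1 - \<delta>) * (A1 - e) / ((1 - \<delta> * a) * e)"
      using n e by (simp add: divide_simps)
    finally show ?case by simp
  qed
  from tendsto_cong[OF this] lim1 have "(L \<longlongrightarrow> 1) (at_left 1)" by simp
  moreover have "\<forall>\<^sub>F \<delta> in at_left 1. ((\<lambda>p. Eng_PEAR VP \<delta> p / Eng_APP VP \<delta>) \<longlongrightarrow> L \<delta>) (at_right 0)"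
    using ev by eventually_elim (rule part1)
  ultimately show ?thesis by blast
qed

lemma util_part:
  fixes VP :: real
  assumes VP: "VP \<ge> 0"
  shows "\<exists>L. (\<forall>\<^sub>F \<delta> in at_left 1.
              ((\<lambda>p. Util_PEAR VP \<delta> p / Util_APP VP \<delta>) \<longlongrightarrow> L \<delta>) (at_right 0))
            \<and> (L \<longlongrightarrow> 1 + 1 / ln (1 + 2 * exp VP)) (at_left 1)"
proof -
  define u where "u = util_step [VP, VP]"
  define U1 where "U1 = util_step [VP, -1]"
  define a where "a = choice_prob [VP, -1] 2"
  have u_eq: "u = ln (1 + 2 * exp VP)"
  proof -
    have "1 + exp VP + exp VP = 1 + 2 * exp VP" by simp
    thus ?thesis unfolding u_def util_step2 LSE_def by (rule arg_cong)
  qed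
  have u: "0 < u" unfolding u_eq by (simp add: add_pos_pos)
  have a: "0 \<le> a" "a < 1" unfolding a_def by (rule choice_prob_nonneg, rule a_lt1)
  define L where "L \<delta> = (1 / (1 - \<delta>) + ((U1 - u) / (1 - \<delta> * a) + u / (1 - \<delta>))) / (u / (1 - \<delta>))" for \<delta> :: real
  have ev: "\<forall>\<^sub>F \<delta> in at_left 1. \<delta> \<in> {0<..<(1::real)}"
    by (rule eventually_at_left_real) simp
  have da: "\<delta> * a < 1" if "\<delta> \<in> {0<..<(1::real)}" for \<delta>
  proof -
    have "\<delta> * a \<le> 1 * a" using that a by (intro mult_right_mono) auto
    thus ?thesis using a by simp
  qed
  have part1: "((\<lambda>p. Util_PEAR VP \<delta> p / Util_APP VP \<delta>) \<longlongrightarrow> L \<delta>) (at_right 0)"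
    if d: "\<delta> \<in> {0<..<(1::real)}" for \<delta>
  proof -
    have d': "0 < \<delta>" "\<delta> < 1" using d by auto
    have app: "Util_APP VP \<delta> = u / (1 - \<delta>)"
      unfolding Util_APP_def u_def by (rule APP_geo[OF d'])
    have sm: "(\<Sum>t. \<delta> ^ t * (a ^ t * U1 + (1 - a ^ t) * u)) = (U1 - u) / (1 - \<delta> * a) + u / (1 - \<delta>)"
      by (rule sums_unique[symmetric], rule geo_mix[OF d' a])
    have "((\<lambda>p. p * util_pear_given VP \<delta> p ((1 - p) / p) + (1 - p) * util_pear_given VP \<delta> p (-1))
          \<longlongrightarrow> 1 / (1 - \<delta>) + (1 - 0) * ((U1 - u) / (1 - \<delta> * a) + u / (1 - \<delta>))) (at_right 0)"
      using util_neg_lim[OF d', of VP] unfolding sm[unfolded U1_def u_def a_def]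
      by (intro tendsto_intros lim_pos_util[OF VP d']) (simp_all add: U1_def u_def a_def)
    hence "((\<lambda>p. Util_PEAR VP \<delta> p) \<longlongrightarrow> 1 / (1 - \<delta>) + ((U1 - u) / (1 - \<delta> * a) + u / (1 - \<delta>))) (at_right 0)"
      by (simp add: Util_PEAR_def)
    hence "((\<lambda>p. Util_PEAR VP \<delta> p / (u / (1 - \<delta>))) \<longlongrightarrow> L \<delta>) (at_right 0)"
      unfolding L_def by (rule tendsto_divide) (use u d' in auto)
    thus ?thesis by (simp add: app)
  qed
  have "((\<lambda>\<delta>. 1 / u + (1 - \<delta>) * (U1 - u) / ((1 - \<delta> * a) * u) + 1) \<longlongrightarrow>
          1 / u + (1 - 1) * (U1 - u) / ((1 - 1 * a) * u) + 1) (at_left (1::real))"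
    using a u by (intro tendsto_intros) auto
  have lim1: "((\<lambda>\<delta>. 1 / u + (1 - \<delta>) * (U1 - u) / ((1 - \<delta> * a) * u) + 1) \<longlongrightarrow> 1 + 1 / ln (1 + 2 * exp VP)) (at_left (1::real))"
  proof -
    have "1 / u + (1 - 1) * (U1 - u) / ((1 - 1 * a) * u) + 1 = 1 + 1 / ln (1 + 2 * exp VP)"
      by (simp only: u_eq) simp
    with \<open>((\<lambda>\<delta>. 1 / u + (1 - \<delta>) * (U1 - u) / ((1 - \<delta> * a) * u) + 1) \<longlongrightarrow>
          1 / u + (1 - 1) * (U1 - u) / ((1 - 1 * a) * u) + 1) (at_left (1::real))\<close>
    show ?thesis by (simp only:)
  qed
  have "\<forall>\<^sub>F \<delta> in at_left 1. 1 / u + (1 - \<delta>) * (U1 - u) / ((1 - \<delta> * a) * u) + 1 = L \<delta>"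
    using ev
  proof eventually_elim
    case (elim \<delta>)
    have n: "1 - \<delta> \<noteq> 0" "1 - \<delta> * a \<noteq> 0" using elim da[OF elim] by auto
    have Y: "u / (1 - \<delta>) \<noteq> 0" using u n by simp
    have gen: "(X + Z) / Z = X / Z + 1" if "Z \<noteq> 0" for X Z :: real
      using that by (simp add: add_divide_distrib)
    have "L \<delta> = (1 / (1 - \<delta>) + (U1 - u) / (1 - \<delta> * a)) / (u / (1 - \<delta>)) + 1"
      unfolding L_def add.assoc[symmetric] by (rule gen[OF Y])
    also have "(1 / (1 - \<delta>) + (U1 - u) / (1 - \<delta> * a)) / (u / (1 - \<delta>)) =
               1 / u + (1 - \<delta>) * (U1 - u) / ((1 - \<delta> * a) * u)"
      using n u by (simp add: divide_simps)
    finally show ?case by simp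
  qed
  from tendsto_cong[OF this] lim1 have "(L \<longlongrightarrow> 1 + 1 / ln (1 + 2 * exp VP)) (at_left 1)" by simp
  moreover have "\<forall>\<^sub>F \<delta> in at_left 1. ((\<lambda>p. Util_PEAR VP \<delta> p / Util_APP VP \<delta>) \<longlongrightarrow> L \<delta>) (at_right 0)"
    using ev by eventually_elim (rule part1)
  ultimately show ?thesis by blast
qed

theorem corollary2:
  fixes VP :: real
  assumes "VP \<ge> 0"
  shows "(\<exists>L. (\<forall>\<^sub>F \<delta> in at_left 1.
              ((\<lambda>p. Eng_PEAR VP \<delta> p / Eng_APP VP \<delta>) \<longlongrightarrow> L \<delta>) (at_right 0))
            \<and> (L \<longlongrightarrow> 1) (at_left 1))
       \<and> (\<exists>L. (\<forall>\<^sub>F \<delta> in at_left 1.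
              ((\<lambda>p. Util_PEAR VP \<delta> p / Util_APP VP \<delta>) \<longlongrightarrow> L \<delta>) (at_right 0))
            \<and> (L \<longlongrightarrow> 1 + 1 / ln (1 + 2 * exp VP)) (at_left 1))"
  using eng_part[OF assms] util_part[OF assms] by blast


end
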